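(* Let $\mu$ be a continuous capacity on a measurable space $(\Omega,\mathcal{F})$ and let $\mathcal{F}_0$ be a sub-$\sigma$-algebra of $\mathcal{F}$ with $\mu(A)\in\{0,1\}$ for all $A\in\mathcal{F}_0$. Then: (i) for every $\mathcal{F}_0$-measurable real-valued random variable $\xi$, $$\mu\Big(\Big\{\omega:\ \xi(\omega)\ge \int_{\Omega}\xi\, d\mu\Big\}\Big)=1\quad\text{and}\quad \mu\Big(\Big\{\omega:\ \xi(\omega)\le\int_{\Omega}\xi\, d\bar{\mu}\Big\}\Big)=1;$$ (ii) if moreover $\mu(A\cap B)=1$ for all $A,B\in\mathcal{F}_0$ with $\mu(A)=\mu(B)=1$, then for every $\mathcal{F}_0$-measurable real-valued random variable $\xi$, $$\mu\Big(\Big\{\omega:\ \int_{\Omega}\xi\, d\mu \le\xi(\omega)\le\int_{\Omega}\xi\, d\bar{\mu}\Big\}\Big)=1.$$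
   Context: A capacity on $\mathcal{F}$ is a set function $\mu:\mathcal{F}\to[0,1]$ with $\mu(\emptyset)=0$, $\mu(\Omega)=1$ and $\mu(A)\le\mu(B)$ whenever $A\subseteq B$; it is continuous if $\mu(A_n)\to\mu(A)$ both whenever $A_n\uparrow A$ and whenever $A_n\downarrow A$. The conjugate capacity is $\bar{\mu}(A)=1-\mu(A^c)$. The Choquet integral of a real-valued $\mathcal{F}$-measurable $\xi$ with respect to a capacity $\mu$ is $\int_{\Omega}\xi\, d\mu=\int_{0}^{\infty}\mu(\{\xi\ge t\})\,dt+\int_{-\infty}^0[\mu(\{\xi\ge t\})-1]\,dt$. *)

theory Defs
  imports "HOL-Analysis.Analysis"
begin

text \<open>The measurable space (Omega, F) is represented by a measure M:
  Omega = space M, F = sets M. Set functions are real-valued, considered on sets M.\<close>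

definition capacity :: "'a measure \<Rightarrow> ('a set \<Rightarrow> real) \<Rightarrow> bool" where
  "capacity M \<mu> \<longleftrightarrow>
     \<mu> {} = 0 \<and> \<mu> (space M) = 1 \<and>
     (\<forall>A\<in>sets M. 0 \<le> \<mu> A \<and> \<mu> A \<le> 1) \<and>
     (\<forall>A\<in>sets M. \<forall>B\<in>sets M. A \<subseteq> B \<longrightarrow> \<mu> A \<le> \<mu> B)"

definition continuous_capacity :: "'a measure \<Rightarrow> ('a set \<Rightarrow> real) \<Rightarrow> bool" where
  "continuous_capacity M \<mu> \<longleftrightarrow> capacity M \<mu> \<and>
     (\<forall>A. range A \<subseteq> sets M \<longrightarrow> incseq A \<longrightarrow> (\<lambda>n. \<mu> (A n)) \<longlonglongrightarrow> \<mu> (\<Union>n. A n)) \<and>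
     (\<forall>A. range A \<subseteq> sets M \<longrightarrow> decseq A \<longrightarrow> (\<lambda>n. \<mu> (A n)) \<longlonglongrightarrow> \<mu> (\<Inter>n. A n))"

definition conjugate_capacity :: "'a measure \<Rightarrow> ('a set \<Rightarrow> real) \<Rightarrow> ('a set \<Rightarrow> real)" where
  "conjugate_capacity M \<mu> A = 1 - \<mu> (space M - A)"

definition choquet_integral :: "'a measure \<Rightarrow> ('a set \<Rightarrow> real) \<Rightarrow> ('a \<Rightarrow> real) \<Rightarrow> real" where
  "choquet_integral M \<mu> \<xi> =
     (LINT t:{0..}|lborel. \<mu> {\<omega> \<in> space M. \<xi> \<omega> \<ge> t}) +
     (LINT t:{..<0}|lborel. \<mu> {\<omega> \<in> space M. \<xi> \<omega> \<ge> t} - 1)"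

end

theory Submission imports Defs begin

lemma step_fun:
  fixes f :: "real \<Rightarrow> real"
  assumes zo: "\<And>t. f t = 0 \<or> f t = 1" and am: "\<And>s t. s \<le> t \<Longrightarrow> f t \<le> f s"
    and top: "(\<lambda>n. f (real n)) \<longlonglongrightarrow> 0" and bot: "(\<lambda>n. f (- real n)) \<longlonglongrightarrow> 1"
    and lc: "\<And>t. (\<lambda>n. f (t - 1 / real (Suc n))) \<longlonglongrightarrow> f t"
  shows "\<exists>c. \<forall>t. f t = (if t \<le> c then 1 else 0)"
proof -
  define S where "S = {t. f t = 1}"
  have ne: "S \<noteq> {}"
  proof
    assume "S = {}"
    hence "\<And>n. f (- real n) = 0" using zo unfolding S_def by blast
    hence "(\<lambda>n. f (- real n)) \<longlonglongrightarrow> 0" by simp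
    with bot show False using LIMSEQ_unique by fastforce
  qed
  have bdd: "bdd_above S"
  proof (rule ccontr)
    assume "\<not> bdd_above S"
    hence "\<And>n. f (real n) = 1"
    proof -
      fix n :: nat
      from \<open>\<not> bdd_above S\<close> obtain s where "s \<in> S" "s > real n"
        unfolding bdd_above_def by (meson not_le)
      hence "f (real n) \<ge> 1" using am[of "real n" s] unfolding S_def by simp
      thus "f (real n) = 1" using zo[of "real n"] by auto
    qed
    hence "(\<lambda>n. f (real n)) \<longlonglongrightarrow> 1" by simp
    with top show False using LIMSEQ_unique by fastforce
  qed
  define c where "c = Sup S"
  have lt: "f t = 1" if "t < c" for t
  proof -
    obtain s where "s \<in> S" "t < s" using less_cSup_iff[OF ne bdd] \<open>t < c\<close> c_def by auto
    hence "f t \<ge> 1" using am[of t s] unfolding S_def by simp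
    thus ?thesis using zo[of t] by auto
  qed
  have gt: "f t = 0" if "t > c" for t
  proof -
    have "t \<notin> S" using cSup_upper[OF _ bdd, of t] that c_def by auto
    thus ?thesis using zo[of t] S_def by auto
  qed
  have "f c = 1"
  proof -
    have "\<And>n. f (c - 1 / real (Suc n)) = 1" by (intro lt) simp
    hence "(\<lambda>n. f (c - 1 / real (Suc n))) \<longlonglongrightarrow> 1" by simp
    with lc[of c] show ?thesis using LIMSEQ_unique by blast
  qed
  hence "\<forall>t. f t = (if t \<le> c then 1 else 0)"
    using lt gt by (metis linorder_neqE_linordered_idom order.order_iff_strict order_less_le_trans not_le)
  thus ?thesis by blast
qed

lemma choq_step:
  assumes "\<And>t. \<mu> {\<omega> \<in> space M. \<xi> \<omega> \<ge> t} = (if t \<le> c then 1 else 0)"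
  shows "choquet_integral M \<mu> \<xi> = c"
proof -
  have 1: "(LINT t:{0..}|lborel. \<mu> {\<omega> \<in> space M. \<xi> \<omega> \<ge> t}) = max c 0"
  proof -
    have "(\<lambda>t. indicator {0..} t *\<^sub>R \<mu> {\<omega> \<in> space M. \<xi> \<omega> \<ge> t}) = (indicator {0..c} :: real \<Rightarrow> real)"
      by (rule ext) (auto simp: assms indicator_def)
    hence "(LINT t:{0..}|lborel. \<mu> {\<omega> \<in> space M. \<xi> \<omega> \<ge> t}) = integral\<^sup>L lborel (indicator {0..c} :: real \<Rightarrow> real)"
      unfolding set_lebesgue_integral_def by simp
    also have "\<dots> = measure lborel {0..c}" by simp
    also have "\<dots> = max c 0" by (cases "c \<ge> 0") auto
    finally show ?thesis .
  qed
  have 2: "(LINT t:{..<0}|lborel. \<mu> {\<omega> \<in> space M. \<xi> \<omega> \<ge> t} - 1) = min c 0"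
  proof -
    have "(\<lambda>t. indicator {..<0} t *\<^sub>R (\<mu> {\<omega> \<in> space M. \<xi> \<omega> \<ge> t} - 1)) = (\<lambda>t. - (indicator {min c 0<..<0} t :: real))"
      by (rule ext) (auto simp: assms indicator_def)
    hence "(LINT t:{..<0}|lborel. \<mu> {\<omega> \<in> space M. \<xi> \<omega> \<ge> t} - 1) = - integral\<^sup>L lborel (indicator {min c 0<..<0} :: real \<Rightarrow> real)"
      unfolding set_lebesgue_integral_def by simp
    also have "integral\<^sup>L lborel (indicator {min c 0<..<0} :: real \<Rightarrow> real) = measure lborel {min c 0<..<0}" by simp
    also have "\<dots> = - min c 0" by simp
    finally show ?thesis by simp
  qed
  show ?thesis unfolding choquet_integral_def 1 2 by simp
qed


lemma inv_suc_mono: "m \<le> n \<Longrightarrow> 1 / real (Suc n) \<le> 1 / real (Suc m)"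
  by (simp add: frac_le)

lemma part1:
  fixes M F0 :: "'a measure" and \<mu> :: "'a set \<Rightarrow> real"
  assumes cont: "continuous_capacity M \<mu>"
    and sub_space: "space F0 = space M"
    and sub_sets: "sets F0 \<subseteq> sets M"
    and zero_one: "\<forall>A\<in>sets F0. \<mu> A = 0 \<or> \<mu> A = 1"
    and xm: "\<xi> \<in> borel_measurable F0"
  shows "\<mu> {\<omega> \<in> space M. \<xi> \<omega> \<ge> choquet_integral M \<mu> \<xi>} = 1 \<and>
         \<mu> {\<omega> \<in> space M. \<xi> \<omega> \<le> choquet_integral M (conjugate_capacity M \<mu>) \<xi>} = 1"
proof -
  have cap: "capacity M \<mu>" using cont unfolding continuous_capacity_def by blast
  have emp: "\<mu> {} = 0" and sp: "\<mu> (space M) = 1" using cap unfolding capacity_def by auto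
  have mono: "\<mu> A \<le> \<mu> B" if "A \<in> sets M" "B \<in> sets M" "A \<subseteq> B" for A B
    using cap that unfolding capacity_def by blast
  have inc: "(\<lambda>n. \<mu> (A n)) \<longlonglongrightarrow> \<mu> (\<Union>n. A n)" if "range A \<subseteq> sets M" "incseq A" for A
    using cont that unfolding continuous_capacity_def by blast
  have dec: "(\<lambda>n. \<mu> (A n)) \<longlonglongrightarrow> \<mu> (\<Inter>n. A n)" if "range A \<subseteq> sets M" "decseq A" for A
    using cont that unfolding continuous_capacity_def by blast
  have s1: "{\<omega> \<in> space M. t \<le> \<xi> \<omega>} \<in> sets F0" for t
  proof -
    have "{\<omega> \<in> space F0. t \<le> \<xi> \<omega>} \<in> sets F0" using xm by measurable
    thus ?thesis using sub_space by simp
  qed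
  have s2: "{\<omega> \<in> space M. \<xi> \<omega> < t} \<in> sets F0" for t
  proof -
    have "{\<omega> \<in> space F0. \<xi> \<omega> < t} \<in> sets F0" using xm by measurable
    thus ?thesis using sub_space by simp
  qed
  have s3: "{\<omega> \<in> space M. \<xi> \<omega> \<le> t} \<in> sets F0" for t
  proof -
    have "{\<omega> \<in> space F0. \<xi> \<omega> \<le> t} \<in> sets F0" using xm by measurable
    thus ?thesis using sub_space by simp
  qed
  define f where "f t = \<mu> {\<omega> \<in> space M. t \<le> \<xi> \<omega>}" for t
  define h where "h t = \<mu> {\<omega> \<in> space M. \<xi> \<omega> < t}" for t
  define g where "g t = conjugate_capacity M \<mu> {\<omega> \<in> space M. t \<le> \<xi> \<omega>}" for t
  have gh: "g t = 1 - h t" for t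
  proof -
    have "space M - {\<omega> \<in> space M. t \<le> \<xi> \<omega>} = {\<omega> \<in> space M. \<xi> \<omega> < t}" by auto
    thus ?thesis unfolding g_def h_def conjugate_capacity_def by simp
  qed
  have "\<exists>c. \<forall>t. f t = (if t \<le> c then 1 else 0)"
  proof (rule step_fun)
    show "f t = 0 \<or> f t = 1" for t using zero_one s1 unfolding f_def by blast
    show "f t \<le> f s" if "s \<le> t" for s t
      unfolding f_def using that s1 sub_sets by (intro mono) auto
    have "(\<lambda>n. \<mu> {\<omega> \<in> space M. real n \<le> \<xi> \<omega>}) \<longlonglongrightarrow> \<mu> (\<Inter>n. {\<omega> \<in> space M. real n \<le> \<xi> \<omega>})"
      using s1 sub_sets by (intro dec) (auto simp: decseq_def)
    moreover have "(\<Inter>n. {\<omega> \<in> space M. real n \<le> \<xi> \<omega>}) = {}"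
    proof (safe)
      fix x assume "x \<in> (\<Inter>n. {\<omega> \<in> space M. real n \<le> \<xi> \<omega>})"
      moreover obtain n where "\<xi> x < real n" using reals_Archimedean2 by blast
      ultimately have "real n \<le> \<xi> x" by blast
      with \<open>\<xi> x < real n\<close> show "x \<in> {}" by linarith
    qed
    ultimately show "(\<lambda>n. f (real n)) \<longlonglongrightarrow> 0" unfolding f_def using emp by simp
    have "(\<lambda>n. \<mu> {\<omega> \<in> space M. - real n \<le> \<xi> \<omega>}) \<longlonglongrightarrow> \<mu> (\<Union>n. {\<omega> \<in> space M. - real n \<le> \<xi> \<omega>})"
      using s1 sub_sets by (intro inc) (auto simp: incseq_def)
    moreover have "(\<Union>n. {\<omega> \<in> space M. - real n \<le> \<xi> \<omega>}) = space M"
    proof (safe)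
      fix x assume "x \<in> space M"
      obtain n where "- \<xi> x \<le> real n" using real_arch_simple by blast
      hence "- real n \<le> \<xi> x" by linarith
      thus "x \<in> (\<Union>n. {\<omega> \<in> space M. - real n \<le> \<xi> \<omega>})" using \<open>x \<in> space M\<close> by blast
    qed
    ultimately show "(\<lambda>n. f (- real n)) \<longlonglongrightarrow> 1" unfolding f_def using sp by simp
    fix t
    have "(\<lambda>n. \<mu> {\<omega> \<in> space M. t - 1 / real (Suc n) \<le> \<xi> \<omega>}) \<longlonglongrightarrow> \<mu> (\<Inter>n. {\<omega> \<in> space M. t - 1 / real (Suc n) \<le> \<xi> \<omega>})"
      using s1 sub_sets
    proof (intro dec)
      show "decseq (\<lambda>n. {\<omega> \<in> space M. t - 1 / real (Suc n) \<le> \<xi> \<omega>})" unfolding decseq_def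
      proof (intro allI impI subsetI)
        fix m n x assume mn: "m \<le> n" and x: "x \<in> {\<omega> \<in> space M. t - 1 / real (Suc n) \<le> \<xi> \<omega>}"
        hence "x \<in> space M" "t - 1 / real (Suc n) \<le> \<xi> x" by auto
        moreover have "1 / real (Suc n) \<le> 1 / real (Suc m)" using inv_suc_mono[OF mn] .
        ultimately show "x \<in> {\<omega> \<in> space M. t - 1 / real (Suc m) \<le> \<xi> \<omega>}" by simp
      qed
    qed blast
    moreover have "(\<Inter>n. {\<omega> \<in> space M. t - 1 / real (Suc n) \<le> \<xi> \<omega>}) = {\<omega> \<in> space M. t \<le> \<xi> \<omega>}"
    proof (intro equalityI subsetI)
      fix x assume x: "x \<in> (\<Inter>n. {\<omega> \<in> space M. t - 1 / real (Suc n) \<le> \<xi> \<omega>})"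
      hence xs: "x \<in> space M" by blast
      show "x \<in> {\<omega> \<in> space M. t \<le> \<xi> \<omega>}"
      proof (rule ccontr)
        assume "x \<notin> {\<omega> \<in> space M. t \<le> \<xi> \<omega>}"
        hence "0 < t - \<xi> x" using xs by auto
        then obtain n where n: "inverse (real (Suc n)) < t - \<xi> x" using reals_Archimedean by blast
        have "t - 1 / real (Suc n) \<le> \<xi> x" using x by blast
        with n show False by (simp add: inverse_eq_divide)
      qed
    next
      fix x assume "x \<in> {\<omega> \<in> space M. t \<le> \<xi> \<omega>}"
      moreover have "0 \<le> 1 / real (Suc n)" for n by simp
      ultimately show "x \<in> (\<Inter>n. {\<omega> \<in> space M. t - 1 / real (Suc n) \<le> \<xi> \<omega>})"
        by (smt (verit) INT_I mem_Collect_eq)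
    qed
    ultimately show "(\<lambda>n. f (t - 1 / real (Suc n))) \<longlonglongrightarrow> f t" unfolding f_def by simp
  qed
  then obtain c where c: "\<And>t. f t = (if t \<le> c then 1 else 0)" by blast
  have "\<exists>c. \<forall>t. g t = (if t \<le> c then 1 else 0)"
  proof (rule step_fun)
    show "g t = 0 \<or> g t = 1" for t
    proof -
      have "h t = 0 \<or> h t = 1" unfolding h_def using zero_one s2 by blast
      thus ?thesis unfolding gh by auto
    qed
    show "g t \<le> g s" if "s \<le> t" for s t
    proof -
      have "h s \<le> h t" unfolding h_def
        by (rule mono) (use s2 sub_sets that in auto)
      thus ?thesis unfolding gh by simp
    qed
    have "(\<lambda>n. \<mu> {\<omega> \<in> space M. \<xi> \<omega> < real n}) \<longlonglongrightarrow> \<mu> (\<Union>n. {\<omega> \<in> space M. \<xi> \<omega> < real n})"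
      using s2 sub_sets by (intro inc) (auto simp: incseq_def)
    moreover have "(\<Union>n. {\<omega> \<in> space M. \<xi> \<omega> < real n}) = space M"
    proof (safe)
      fix x assume "x \<in> space M"
      obtain n where "\<xi> x < real n" using reals_Archimedean2 by blast
      thus "x \<in> (\<Union>n. {\<omega> \<in> space M. \<xi> \<omega> < real n})" using \<open>x \<in> space M\<close> by blast
    qed
    ultimately have "(\<lambda>n. 1 - h (real n)) \<longlonglongrightarrow> 1 - 1" unfolding h_def using sp
      by (intro tendsto_diff) auto
    thus "(\<lambda>n. g (real n)) \<longlonglongrightarrow> 0" unfolding gh by simp
    have "(\<lambda>n. \<mu> {\<omega> \<in> space M. \<xi> \<omega> < - real n}) \<longlonglongrightarrow> \<mu> (\<Inter>n. {\<omega> \<in> space M. \<xi> \<omega> < - real n})"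
      using s2 sub_sets by (intro dec) (auto simp: decseq_def)
    moreover have "(\<Inter>n. {\<omega> \<in> space M. \<xi> \<omega> < - real n}) = {}"
    proof (safe)
      fix x assume "x \<in> (\<Inter>n. {\<omega> \<in> space M. \<xi> \<omega> < - real n})"
      moreover obtain n where "- \<xi> x \<le> real n" using real_arch_simple by blast
      ultimately have "\<xi> x < - real n" "- \<xi> x \<le> real n" by blast+
      thus "x \<in> {}" by linarith
    qed
    ultimately have "(\<lambda>n. 1 - h (- real n)) \<longlonglongrightarrow> 1 - 0" unfolding h_def using emp
      by (intro tendsto_diff) auto
    thus "(\<lambda>n. g (- real n)) \<longlonglongrightarrow> 1" unfolding gh by simp
    fix t
    have "(\<lambda>n. \<mu> {\<omega> \<in> space M. \<xi> \<omega> < t - 1 / real (Suc n)}) \<longlonglongrightarrow> \<mu> (\<Union>n. {\<omega> \<in> space M. \<xi> \<omega> < t - 1 / real (Suc n)})"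
      using s2 sub_sets
    proof (intro inc)
      show "incseq (\<lambda>n. {\<omega> \<in> space M. \<xi> \<omega> < t - 1 / real (Suc n)})" unfolding incseq_def
      proof (intro allI impI subsetI)
        fix m n x assume mn: "m \<le> n" and x: "x \<in> {\<omega> \<in> space M. \<xi> \<omega> < t - 1 / real (Suc m)}"
        hence "x \<in> space M" "\<xi> x < t - 1 / real (Suc m)" by auto
        moreover have "1 / real (Suc n) \<le> 1 / real (Suc m)" using inv_suc_mono[OF mn] .
        ultimately show "x \<in> {\<omega> \<in> space M. \<xi> \<omega> < t - 1 / real (Suc n)}" by simp
      qed
    qed blast
    moreover have "(\<Union>n. {\<omega> \<in> space M. \<xi> \<omega> < t - 1 / real (Suc n)}) = {\<omega> \<in> space M. \<xi> \<omega> < t}"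
    proof (intro equalityI subsetI)
      fix x assume x: "x \<in> {\<omega> \<in> space M. \<xi> \<omega> < t}"
      hence "0 < t - \<xi> x" by auto
      then obtain n where n: "inverse (real (Suc n)) < t - \<xi> x" using reals_Archimedean by blast
      hence "\<xi> x < t - 1 / real (Suc n)" by (simp add: inverse_eq_divide)
      thus "x \<in> (\<Union>n. {\<omega> \<in> space M. \<xi> \<omega> < t - 1 / real (Suc n)})" using x by blast
    next
      fix x assume x: "x \<in> (\<Union>n. {\<omega> \<in> space M. \<xi> \<omega> < t - 1 / real (Suc n)})"
      then obtain n where "x \<in> space M" "\<xi> x < t - 1 / real (Suc n)" by blast
      moreover have "0 \<le> 1 / real (Suc n)" by simp
      ultimately have "\<xi> x < t" by linarith
      thus "x \<in> {\<omega> \<in> space M. \<xi> \<omega> < t}" using \<open>x \<in> space M\<close> by simp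
    qed
    ultimately have "(\<lambda>n. 1 - h (t - 1 / real (Suc n))) \<longlonglongrightarrow> 1 - h t" unfolding h_def
      by (intro tendsto_diff) auto
    thus "(\<lambda>n. g (t - 1 / real (Suc n))) \<longlonglongrightarrow> g t" unfolding gh by simp
  qed
  then obtain d where d: "\<And>t. g t = (if t \<le> d then 1 else 0)" by blast
  have ci: "choquet_integral M \<mu> \<xi> = c"
    by (rule choq_step) (use c in \<open>simp add: f_def\<close>)
  have di: "choquet_integral M (conjugate_capacity M \<mu>) \<xi> = d"
    by (rule choq_step) (use d in \<open>simp add: g_def\<close>)
  have r1: "\<mu> {\<omega> \<in> space M. \<xi> \<omega> \<ge> c} = 1" using c[of c] by (simp add: f_def)
  have hd: "h t = 1" if "t > d" for t using d[of t] that gh[of t] by simp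
  have "(\<lambda>n. \<mu> {\<omega> \<in> space M. \<xi> \<omega> < d + 1 / real (Suc n)}) \<longlonglongrightarrow> \<mu> (\<Inter>n. {\<omega> \<in> space M. \<xi> \<omega> < d + 1 / real (Suc n)})"
    using s2 sub_sets
  proof (intro dec)
    show "decseq (\<lambda>n. {\<omega> \<in> space M. \<xi> \<omega> < d + 1 / real (Suc n)})" unfolding decseq_def
    proof (intro allI impI subsetI)
      fix m n x assume mn: "m \<le> n" and x: "x \<in> {\<omega> \<in> space M. \<xi> \<omega> < d + 1 / real (Suc n)}"
      hence "x \<in> space M" "\<xi> x < d + 1 / real (Suc n)" by auto
      moreover have "1 / real (Suc n) \<le> 1 / real (Suc m)" using inv_suc_mono[OF mn] .
      ultimately show "x \<in> {\<omega> \<in> space M. \<xi> \<omega> < d + 1 / real (Suc m)}" by simp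
    qed
  qed blast
  moreover have "(\<Inter>n. {\<omega> \<in> space M. \<xi> \<omega> < d + 1 / real (Suc n)}) = {\<omega> \<in> space M. \<xi> \<omega> \<le> d}"
  proof (intro equalityI subsetI)
    fix x assume x: "x \<in> (\<Inter>n. {\<omega> \<in> space M. \<xi> \<omega> < d + 1 / real (Suc n)})"
    hence xs: "x \<in> space M" by blast
    show "x \<in> {\<omega> \<in> space M. \<xi> \<omega> \<le> d}"
    proof (rule ccontr)
      assume "x \<notin> {\<omega> \<in> space M. \<xi> \<omega> \<le> d}"
      hence "0 < \<xi> x - d" using xs by auto
      then obtain n where n: "inverse (real (Suc n)) < \<xi> x - d" using reals_Archimedean by blast
      have "\<xi> x < d + 1 / real (Suc n)" using x by blast
      with n show False by (simp add: inverse_eq_divide)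
    qed
  next
    fix x assume x: "x \<in> {\<omega> \<in> space M. \<xi> \<omega> \<le> d}"
    have "\<xi> x < d + 1 / real (Suc n)" for n
    proof -
      have "0 < 1 / real (Suc n)" by simp
      moreover have "\<xi> x \<le> d" using x by simp
      ultimately show ?thesis by linarith
    qed
    thus "x \<in> (\<Inter>n. {\<omega> \<in> space M. \<xi> \<omega> < d + 1 / real (Suc n)})" using x by blast
  qed
  moreover have "(\<lambda>n. \<mu> {\<omega> \<in> space M. \<xi> \<omega> < d + 1 / real (Suc n)}) = (\<lambda>n. 1)"
    using hd unfolding h_def by (intro ext) simp
  ultimately have "(\<lambda>n. 1::real) \<longlonglongrightarrow> \<mu> {\<omega> \<in> space M. \<xi> \<omega> \<le> d}" by simp
  hence r2: "\<mu> {\<omega> \<in> space M. \<xi> \<omega> \<le> d} = 1" using LIMSEQ_unique tendsto_const by blast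
  show ?thesis using ci di r1 r2 by simp
qed

theorem theorem2:
  fixes M F0 :: "'a measure" and \<mu> :: "'a set \<Rightarrow> real"
  assumes cont: "continuous_capacity M \<mu>"
    and sub_space: "space F0 = space M"
    and sub_sets: "sets F0 \<subseteq> sets M"
    and zero_one: "\<forall>A\<in>sets F0. \<mu> A = 0 \<or> \<mu> A = 1"
  shows "(\<forall>\<xi>. \<xi> \<in> borel_measurable F0 \<longrightarrow>
            \<mu> {\<omega> \<in> space M. \<xi> \<omega> \<ge> choquet_integral M \<mu> \<xi>} = 1 \<and>
            \<mu> {\<omega> \<in> space M. \<xi> \<omega> \<le> choquet_integral M (conjugate_capacity M \<mu>) \<xi>} = 1)
       \<and> ((\<forall>A\<in>sets F0. \<forall>B\<in>sets F0. \<mu> A = 1 \<longrightarrow> \<mu> B = 1 \<longrightarrow> \<mu> (A \<inter> B) = 1) \<longrightarrow>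
          (\<forall>\<xi>. \<xi> \<in> borel_measurable F0 \<longrightarrow>
            \<mu> {\<omega> \<in> space M. choquet_integral M \<mu> \<xi> \<le> \<xi> \<omega> \<and>
                   \<xi> \<omega> \<le> choquet_integral M (conjugate_capacity M \<mu>) \<xi>} = 1))"
proof (intro conjI allI impI)
  fix \<xi> :: "'a \<Rightarrow> real" assume xm: "\<xi> \<in> borel_measurable F0"
  note p = part1[OF cont sub_space sub_sets zero_one xm]
  show "\<mu> {\<omega> \<in> space M. \<xi> \<omega> \<ge> choquet_integral M \<mu> \<xi>} = 1" using p by blast
  show "\<mu> {\<omega> \<in> space M. \<xi> \<omega> \<le> choquet_integral M (conjugate_capacity M \<mu>) \<xi>} = 1" using p by blast
next
  fix \<xi> :: "'a \<Rightarrow> real" assume inter: "\<forall>A\<in>sets F0. \<forall>B\<in>sets F0. \<mu> A = 1 \<longrightarrow> \<mu> B = 1 \<longrightarrow> \<mu> (A \<inter> B) = 1"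
    and xm: "\<xi> \<in> borel_measurable F0"
  note p = part1[OF cont sub_space sub_sets zero_one xm]
  define c where "c = choquet_integral M \<mu> \<xi>"
  define d where "d = choquet_integral M (conjugate_capacity M \<mu>) \<xi>"
  have A: "{\<omega> \<in> space M. c \<le> \<xi> \<omega>} \<in> sets F0"
  proof -
    have "{\<omega> \<in> space F0. c \<le> \<xi> \<omega>} \<in> sets F0" using xm by measurable
    thus ?thesis using sub_space by simp
  qed
  have B: "{\<omega> \<in> space M. \<xi> \<omega> \<le> d} \<in> sets F0"
  proof -
    have "{\<omega> \<in> space F0. \<xi> \<omega> \<le> d} \<in> sets F0" using xm by measurable
    thus ?thesis using sub_space by simp
  qed
  have "{\<omega> \<in> space M. c \<le> \<xi> \<omega>} \<inter> {\<omega> \<in> space M. \<xi> \<omega> \<le> d} = {\<omega> \<in> space M. c \<le> \<xi> \<omega> \<and> \<xi> \<omega> \<le> d}"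
    by blast
  moreover have "\<mu> ({\<omega> \<in> space M. c \<le> \<xi> \<omega>} \<inter> {\<omega> \<in> space M. \<xi> \<omega> \<le> d}) = 1"
    using inter A B p unfolding c_def d_def by blast
  ultimately show "\<mu> {\<omega> \<in> space M. choquet_integral M \<mu> \<xi> \<le> \<xi> \<omega> \<and>
                   \<xi> \<omega> \<le> choquet_integral M (conjugate_capacity M \<mu>) \<xi>} = 1"
    unfolding c_def d_def by simp
qed

end
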